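(* For every instance of the game and every facility placement profile $\mathbf{s}$, every minimum neighborhood set $\mathrm{MNS}_{\mathbf{s}}(F^*,V^* )$ is uniquely determined, hence the class set $\mathcal{C}=\{C_1,C_2,\ldots\}$ of $\mathbf{s}$ is unique; moreover $\ell(C_i)<\ell(C_{i+1})$ for all $i\ge1$ for which $C_{i+1}$ exists.
   Context: Setting: a finite directed graph $H=(V,E,w)$ with vertex weights $w:V\to\mathbb{Q}_{>0}$ (vertices are clients), $w(X)=\sum_{v\in X}w(v)$, a finite set $F$ of facility agents, and a facility placement profile $\mathbf{s}=(s_f)_{f\in F}$ with $s_f\in V$. For $v\in V$ let $N(v)=\{v\}\cup\{u:(v,u)\in E\}$, $N_{\mathbf{s}}(v)=\{f\in F:s_f\in N(v)\}$, $A_{\mathbf{s}}(f)=\{v\in V: f\in N_{\mathbf{s}}(v)\}$ and $A_{\mathbf{s}}(T)=\bigcup_{f\in T}A_{\mathbf{s}}(f)$ for $T\subseteq F$. For nonempty $F^*\subseteq F$ and $V^*\subseteq V$, the minimum neighborhood set $\mathrm{MNS}_{\mathbf{s}}(F^*,V^* )$ is a subset of $F^*$ of largest cardinality among the nonempty $T\subseteq F^*$ minimizing $\frac{w(A_{\mathbf{s}}(T)\cap V^* )}{|T|}$. The class set is defined inductively: for $i\ge1$, while $F\setminus\bigcup_{j<i}F_j\neq\varnothing$, let $F_i=\mathrm{MNS}_{\mathbf{s}}\big(F\setminus\bigcup_{j<i}F_j,\ V\setminus\bigcup_{j<i}V_j\big)$ and $V_i=A_{\mathbf{s}}(F_i)\setminus\bigcup_{j<i}V_j$;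 the class is $C_i=(F_i,V_i)$ with average load $\ell(C_i)=w(V_i)/|F_i|$. *)

theory Defs
  imports Main "HOL.Rat"
begin

definition nbh :: "('v \<times> 'v) set \<Rightarrow> 'v \<Rightarrow> 'v set" where
  "nbh E v = insert v {u. (v, u) \<in> E}"

definition Aset :: "'v set \<Rightarrow> ('v \<times> 'v) set \<Rightarrow> ('f \<Rightarrow> 'v) \<Rightarrow> 'f set \<Rightarrow> 'v set" where
  "Aset V E s T = {v \<in> V. \<exists>f \<in> T. s f \<in> nbh E v}"

definition ratio :: "'v set \<Rightarrow> ('v \<times> 'v) set \<Rightarrow> ('v \<Rightarrow> rat) \<Rightarrow> ('f \<Rightarrow> 'v)
    \<Rightarrow> 'v set \<Rightarrow> 'f set \<Rightarrow> rat" where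
  "ratio V E w s Vst T = sum w (Aset V E s T \<inter> Vst) / of_nat (card T)"

definition is_MNS :: "'v set \<Rightarrow> ('v \<times> 'v) set \<Rightarrow> ('v \<Rightarrow> rat) \<Rightarrow> ('f \<Rightarrow> 'v)
    \<Rightarrow> 'f set \<Rightarrow> 'v set \<Rightarrow> 'f set \<Rightarrow> bool" where
  "is_MNS V E w s Fst Vst T \<longleftrightarrow>
     T \<subseteq> Fst \<and> T \<noteq> {} \<and>
     (\<forall>T'. T' \<subseteq> Fst \<and> T' \<noteq> {} \<longrightarrow> ratio V E w s Vst T \<le> ratio V E w s Vst T') \<and>
     (\<forall>T'. T' \<subseteq> Fst \<and> T' \<noteq> {} \<and> ratio V E w s Vst T' = ratio V E w s Vst T
           \<longrightarrow> card T' \<le> card T)"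

text \<open>A class set of length k, 0-indexed: class C_(i+1) of the paper is (Fc i, Vc i).\<close>
definition is_class_seq :: "'v set \<Rightarrow> ('v \<times> 'v) set \<Rightarrow> ('v \<Rightarrow> rat) \<Rightarrow> ('f \<Rightarrow> 'v)
    \<Rightarrow> 'f set \<Rightarrow> nat \<Rightarrow> (nat \<Rightarrow> 'f set) \<Rightarrow> (nat \<Rightarrow> 'v set) \<Rightarrow> bool" where
  "is_class_seq V E w s F k Fc Vc \<longleftrightarrow>
     (\<forall>i<k. F - \<Union>(Fc ` {..<i}) \<noteq> {} \<and>
            is_MNS V E w s (F - \<Union>(Fc ` {..<i})) (V - \<Union>(Vc ` {..<i})) (Fc i) \<and>
            Vc i = Aset V E s (Fc i) - \<Union>(Vc ` {..<i})) \<and>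
     F - \<Union>(Fc ` {..<k}) = {}"

definition load :: "('v \<Rightarrow> rat) \<Rightarrow> 'f set \<Rightarrow> 'v set \<Rightarrow> rat" where
  "load w Fi Vi = sum w Vi / of_nat (card Fi)"

end

theory Submission
  imports Defs
begin

lemma Aset_Un: "Aset V E s (A \<union> B) = Aset V E s A \<union> Aset V E s B"
  unfolding Aset_def by auto

lemma Aset_Int: "Aset V E s (A \<inter> B) \<subseteq> Aset V E s A \<inter> Aset V E s B"
  unfolding Aset_def by auto

lemma Aset_sub: "Aset V E s A \<subseteq> V"
  unfolding Aset_def by auto

lemma union_min:
  assumes fV: "finite V" and wpos: "\<forall>v\<in>V. w v > 0" and fF: "finite Fst"
    and T1: "T1 \<subseteq> Fst" "T1 \<noteq> {}" and T2: "T2 \<subseteq> Fst" "T2 \<noteq> {}"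
    and min: "\<forall>T. T \<subseteq> Fst \<and> T \<noteq> {} \<longrightarrow> lam \<le> ratio V E w s Vst T"
    and r1: "ratio V E w s Vst T1 = lam" and r2: "ratio V E w s Vst T2 = lam"
  shows "ratio V E w s Vst (T1 \<union> T2) = lam"
proof -
  define g where "g = (\<lambda>T. sum w (Aset V E s T \<inter> Vst))"
  have fin: "finite (Aset V E s T \<inter> Vst)" for T
    using fV Aset_sub by (meson finite_subset inf.coboundedI1)
  have fT1: "finite T1" and fT2: "finite T2" using T1 T2 fF finite_subset by auto
  have c1: "card T1 > 0" using fT1 T1 by auto
  have c2: "card T2 > 0" using fT2 T2 by auto
  have g1: "g T1 = lam * of_nat (card T1)" using r1 c1 unfolding ratio_def g_def by auto
  have g2: "g T2 = lam * of_nat (card T2)" using r2 c2 unfolding ratio_def g_def by auto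
  have gi: "lam * of_nat (card (T1 \<inter> T2)) \<le> g (T1 \<inter> T2)"
  proof (cases "T1 \<inter> T2 = {}")
    case True
    have "0 \<le> g (T1 \<inter> T2)" unfolding g_def
      by (rule sum_nonneg) (use wpos Aset_sub in fastforce)
    then show ?thesis using True by simp
  next
    case False
    have ci: "card (T1 \<inter> T2) > 0" using False fT1 by auto
    have "lam \<le> ratio V E w s Vst (T1 \<inter> T2)" proof -
      have "T1 \<inter> T2 \<subseteq> Fst" using T1 by blast
      then show ?thesis using min False by blast
    qed
    then show ?thesis using ci unfolding ratio_def g_def by (simp add: pos_le_divide_eq)
  qed
  have sub: "g (T1 \<union> T2) + g (T1 \<inter> T2) \<le> g T1 + g T2"
  proof -
    let ?X1 = "Aset V E s T1 \<inter> Vst" and ?X2 = "Aset V E s T2 \<inter> Vst"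
    have "Aset V E s (T1 \<union> T2) \<inter> Vst = ?X1 \<union> ?X2" unfolding Aset_Un by blast
    moreover have "sum w (?X1 \<union> ?X2) = sum w ?X1 + sum w ?X2 - sum w (?X1 \<inter> ?X2)"
      by (rule sum_Un[OF fin fin])
    ultimately have e: "g (T1 \<union> T2) = g T1 + g T2 - sum w (?X1 \<inter> ?X2)"
      unfolding g_def by simp
    have s1: "Aset V E s (T1 \<inter> T2) \<inter> Vst \<subseteq> ?X1 \<inter> ?X2" using Aset_Int[of V E s T1 T2] by blast
    have f2: "finite (?X1 \<inter> ?X2)" using fin[of T1] by simp
    have nn: "\<forall>x\<in>?X1 \<inter> ?X2 - (Aset V E s (T1 \<inter> T2) \<inter> Vst). 0 \<le> w x"
      using wpos Aset_sub[of V E s T1] by fastforce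
    have "g (T1 \<inter> T2) \<le> sum w (?X1 \<inter> ?X2)" unfolding g_def
      by (rule sum_mono2[OF f2 s1 nn[rule_format]])
    then show ?thesis using e by simp
  qed
  have cu: "card (T1 \<union> T2) + card (T1 \<inter> T2) = card T1 + card T2"
    using card_Un_Int fT1 fT2 by metis
  have cu': "of_nat (card (T1 \<union> T2)) = (of_nat (card T1) + of_nat (card T2) - of_nat (card (T1 \<inter> T2)) :: rat)"
    using cu by (metis add_diff_cancel_right' of_nat_add)
  have "g (T1 \<union> T2) \<le> lam * of_nat (card (T1 \<union> T2))"
  proof -
    have "lam * of_nat (card (T1 \<union> T2)) = lam * of_nat (card T1) + lam * of_nat (card T2) - lam * of_nat (card (T1 \<inter> T2))"
      unfolding cu' by (simp add: algebra_simps)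
    then show ?thesis using sub gi g1 g2 by linarith
  qed
  moreover have cpos: "card (T1 \<union> T2) > 0" using fT1 fT2 T1 by auto
  ultimately have "ratio V E w s Vst (T1 \<union> T2) \<le> lam"
    unfolding ratio_def g_def by (simp add: divide_le_eq)
  moreover have "lam \<le> ratio V E w s Vst (T1 \<union> T2)" using min T1 T2 by auto
  ultimately show ?thesis by simp
qed

lemma mns_unique:
  assumes fV: "finite V" and wpos: "\<forall>v\<in>V. w v > 0" and fF: "finite Fst" and ne: "Fst \<noteq> {}"
  shows "\<exists>!T. is_MNS V E w s Fst Vst T"
proof -
  define S where "S = {T. T \<subseteq> Fst \<and> T \<noteq> {}}"
  have fS: "finite S" unfolding S_def using fF by simp
  have neS: "S \<noteq> {}" unfolding S_def using ne by blast
  define m where "m = Min (ratio V E w s Vst ` S)"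
  have mle: "m \<le> ratio V E w s Vst T" if "T \<in> S" for T
    unfolding m_def using fS that by simp
  have "m \<in> ratio V E w s Vst ` S" unfolding m_def using fS neS by simp
  define M where "M = {T\<in>S. ratio V E w s Vst T = m}"
  have neM: "M \<noteq> {}" unfolding M_def using \<open>m \<in> ratio V E w s Vst ` S\<close> by auto
  have fM: "finite M" unfolding M_def using fS by simp
  define c where "c = Max (card ` M)"
  have "c \<in> card ` M" unfolding c_def using fM neM by simp
  then obtain T where TM: "T \<in> M" and cT: "card T = c" by auto
  have cle: "card T' \<le> c" if "T' \<in> M" for T' unfolding c_def using fM that by simp
  have ex: "is_MNS V E w s Fst Vst T"
    unfolding is_MNS_def
  proof (intro conjI allI impI)
    show "T \<subseteq> Fst" "T \<noteq> {}" using TM unfolding M_def S_def by auto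
  next
    fix T' assume "T' \<subseteq> Fst \<and> T' \<noteq> {}"
    then have "T' \<in> S" unfolding S_def by simp
    then show "ratio V E w s Vst T \<le> ratio V E w s Vst T'" using mle TM unfolding M_def by simp
  next
    fix T' assume a: "T' \<subseteq> Fst \<and> T' \<noteq> {} \<and> ratio V E w s Vst T' = ratio V E w s Vst T"
    then have "T' \<in> M" using TM unfolding M_def S_def by simp
    then show "card T' \<le> card T" using cle cT by simp
  qed
  have un: "T1 = T2" if m1: "is_MNS V E w s Fst Vst T1" and m2: "is_MNS V E w s Fst Vst T2" for T1 T2
  proof -
    have r: "ratio V E w s Vst T2 = ratio V E w s Vst T1"
      using m1 m2 unfolding is_MNS_def by (meson order_antisym)
    have "ratio V E w s Vst (T1 \<union> T2) = ratio V E w s Vst T1"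
      apply (rule union_min[OF fV wpos fF])
      using m1 m2 r unfolding is_MNS_def by auto
    moreover have "T1 \<union> T2 \<subseteq> Fst" "T1 \<union> T2 \<noteq> {}" using m1 m2 unfolding is_MNS_def by auto
    ultimately have c1: "card (T1 \<union> T2) \<le> card T1" and c2: "card (T1 \<union> T2) \<le> card T2"
      using m1 m2 r unfolding is_MNS_def by auto
    have f: "finite (T1 \<union> T2)" using \<open>T1 \<union> T2 \<subseteq> Fst\<close> fF finite_subset by blast
    have "T1 = T1 \<union> T2" using card_seteq[OF f _ c1] by blast
    moreover have "T2 = T1 \<union> T2" using card_seteq[OF f _ c2] by blast
    ultimately show ?thesis by simp
  qed
  show ?thesis using ex un by blast
qed

lemma class_uniq:
  assumes fV: "finite V" and wpos: "\<forall>v\<in>V. w v > 0" and fF: "finite F"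
    and sq1: "is_class_seq V E w s F k Fc Vc" and sq2: "is_class_seq V E w s F k' Fc' Vc'"
  shows "k = k' \<and> (\<forall>i<k. Fc i = Fc' i \<and> Vc i = Vc' i)"
proof -
  have eq: "i < k \<longrightarrow> i < k' \<longrightarrow> Fc i = Fc' i \<and> Vc i = Vc' i" for i
  proof (induction i rule: less_induct)
    case (less i)
    show ?case
    proof (intro impI)
      assume ik: "i < k" and ik': "i < k'"
      have IH: "Fc j = Fc' j \<and> Vc j = Vc' j" if "j < i" for j
        using less that ik ik' by auto
      have u1: "Fc ` {..<i} = Fc' ` {..<i}" by (rule image_cong) (simp_all add: IH)
      have u2: "Vc ` {..<i} = Vc' ` {..<i}" by (rule image_cong) (simp_all add: IH)
      have a1: "F - \<Union>(Fc ` {..<i}) \<noteq> {}" "is_MNS V E w s (F - \<Union>(Fc ` {..<i})) (V - \<Union>(Vc ` {..<i})) (Fc i)"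
        "Vc i = Aset V E s (Fc i) - \<Union>(Vc ` {..<i})"
        using conjunct1[OF sq1[unfolded is_class_seq_def], rule_format, OF ik] by simp_all
      have a2: "is_MNS V E w s (F - \<Union>(Fc ` {..<i})) (V - \<Union>(Vc ` {..<i})) (Fc' i)"
        "Vc' i = Aset V E s (Fc' i) - \<Union>(Vc ` {..<i})"
        using conjunct1[OF sq2[unfolded is_class_seq_def], rule_format, OF ik'] unfolding u1[symmetric] u2[symmetric] by simp_all
      have "\<exists>!T. is_MNS V E w s (F - \<Union>(Fc ` {..<i})) (V - \<Union>(Vc ` {..<i})) T"
        by (rule mns_unique[OF fV wpos _ a1(1)]) (use fF in simp)
      then have "Fc i = Fc' i" using a1(2) a2(1) by blast
      then show "Fc i = Fc' i \<and> Vc i = Vc' i" using a1(3) a2(2) by simp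
    qed
  qed
  have kk: "k = k'"
  proof (rule ccontr)
    assume "k \<noteq> k'"
    then consider "k < k'" | "k' < k" by linarith
    then show False
    proof cases
      case 1
      have "Fc ` {..<k} = Fc' ` {..<k}" by (rule image_cong) (use eq 1 in auto)
      then show False using sq1 sq2 1 unfolding is_class_seq_def by auto
    next
      case 2
      have "Fc ` {..<k'} = Fc' ` {..<k'}" by (rule image_cong) (use eq 2 in auto)
      moreover have "F - \<Union>(Fc ` {..<k'}) \<noteq> {}"
        using conjunct1[OF sq1[unfolded is_class_seq_def], rule_format, OF 2] by (rule conjunct1)
      ultimately show False using sq2 unfolding is_class_seq_def by simp
    qed
  qed
  show ?thesis using kk eq by auto
qed

lemma load_mono:
  assumes fV: "finite V" and wpos: "\<forall>v\<in>V. w v > 0" and fF: "finite F"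
    and sq: "is_class_seq V E w s F k Fc Vc" and ik: "Suc i < k"
  shows "load w (Fc i) (Vc i) < load w (Fc (Suc i)) (Vc (Suc i))"
proof -
  define UF where "UF = \<Union>(Fc ` {..<i})"
  define UV where "UV = \<Union>(Vc ` {..<i})"
  have uF: "\<Union>(Fc ` {..<Suc i}) = UF \<union> Fc i" unfolding UF_def by (auto simp: lessThan_Suc)
  have uV: "\<Union>(Vc ` {..<Suc i}) = UV \<union> Vc i" unfolding UV_def by (auto simp: lessThan_Suc)
  have m1: "is_MNS V E w s (F - UF) (V - UV) (Fc i)" and v1: "Vc i = Aset V E s (Fc i) - UV"
    using conjunct1[OF sq[unfolded is_class_seq_def], rule_format, OF Suc_lessD[OF ik]] unfolding UF_def UV_def by simp_all
  have m2: "is_MNS V E w s (F - (UF \<union> Fc i)) (V - (UV \<union> Vc i)) (Fc (Suc i))"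
    and v2: "Vc (Suc i) = Aset V E s (Fc (Suc i)) - (UV \<union> Vc i)"
    using conjunct1[OF sq[unfolded is_class_seq_def], rule_format, OF ik] unfolding uF uV by simp_all
  define Vst where "Vst = V - UV"
  define T where "T = Fc i \<union> Fc (Suc i)"
  have s1: "Fc i \<subseteq> F - UF" "Fc i \<noteq> {}" using m1 unfolding is_MNS_def by auto
  have s2: "Fc (Suc i) \<subseteq> F - (UF \<union> Fc i)" "Fc (Suc i) \<noteq> {}" using m2 unfolding is_MNS_def by auto
  have f1: "finite (Fc i)" using s1 fF finite_subset by blast
  have f2: "finite (Fc (Suc i))" using s2 fF finite_subset by blast
  have disj: "Fc i \<inter> Fc (Suc i) = {}" using s2 by blast
  have cT: "card T = card (Fc i) + card (Fc (Suc i))" unfolding T_def using card_Un_disjoint[OF f1 f2 disj] .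
  have p: "card (Fc i) > 0" using f1 s1 by auto
  have q: "card (Fc (Suc i)) > 0" using f2 s2 by auto
  have Tsub: "T \<subseteq> F - UF" "T \<noteq> {}" unfolding T_def using s1 s2 by auto
  have "ratio V E w s Vst (Fc i) \<le> ratio V E w s Vst T" using m1 Tsub unfolding is_MNS_def Vst_def by blast
  moreover have "ratio V E w s Vst T \<noteq> ratio V E w s Vst (Fc i)"
  proof
    assume "ratio V E w s Vst T = ratio V E w s Vst (Fc i)"
    then have "card T \<le> card (Fc i)" using m1 Tsub unfolding is_MNS_def Vst_def by blast
    then show False using cT q by simp
  qed
  ultimately have lt: "ratio V E w s Vst (Fc i) < ratio V E w s Vst T" by simp
  have A1: "Aset V E s (Fc i) \<inter> Vst = Vc i" unfolding v1 Vst_def using Aset_sub[of V E s "Fc i"] by blast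
  have AT: "Aset V E s T \<inter> Vst = Vc i \<union> Vc (Suc i)"
    unfolding T_def Aset_Un v1 v2 Vst_def using Aset_sub[of V E s "Fc i"] Aset_sub[of V E s "Fc (Suc i)"] by blast
  have fVi: "finite (Vc i)" "finite (Vc (Suc i))" using v1 v2 Aset_sub fV finite_subset by (metis Diff_subset)+
  have dV: "Vc i \<inter> Vc (Suc i) = {}" using v2 by blast
  define a where "a = sum w (Vc i)"
  define b where "b = sum w (Vc (Suc i))"
  define pp where "pp = (of_nat (card (Fc i)) :: rat)"
  define qq where "qq = (of_nat (card (Fc (Suc i))) :: rat)"
  have pp: "pp > 0" and qq: "qq > 0" using p q unfolding pp_def qq_def by auto
  have r1: "ratio V E w s Vst (Fc i) = a / pp" unfolding ratio_def A1 a_def pp_def ..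
  have rT: "ratio V E w s Vst T = (a + b) / (pp + qq)"
    unfolding ratio_def AT a_def b_def pp_def qq_def cT sum.union_disjoint[OF fVi dV] by simp
  have "a / pp < (a + b) / (pp + qq)" using lt r1 rT by simp
  then have "a * (pp + qq) < (a + b) * pp" using pp qq by (simp add: field_simps)
  then have "a * qq < b * pp" by (simp add: algebra_simps)
  then have "a / pp < b / qq" using pp qq by (simp add: field_simps)
  then show ?thesis unfolding load_def a_def b_def pp_def qq_def .
qed

definition mns :: "'v set \<Rightarrow> ('v \<times> 'v) set \<Rightarrow> ('v \<Rightarrow> rat) \<Rightarrow> ('f \<Rightarrow> 'v)
    \<Rightarrow> 'f set \<Rightarrow> 'v set \<Rightarrow> 'f set" where
  "mns V E w s Fst Vst = (THE T. is_MNS V E w s Fst Vst T)"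

primrec cum :: "'v set \<Rightarrow> ('v \<times> 'v) set \<Rightarrow> ('v \<Rightarrow> rat) \<Rightarrow> ('f \<Rightarrow> 'v)
    \<Rightarrow> 'f set \<Rightarrow> nat \<Rightarrow> 'f set \<times> 'v set" where
  "cum V E w s F 0 = ({}, {})"
| "cum V E w s F (Suc i) =
     (fst (cum V E w s F i) \<union> mns V E w s (F - fst (cum V E w s F i)) (V - snd (cum V E w s F i)),
      snd (cum V E w s F i) \<union> (Aset V E s (mns V E w s (F - fst (cum V E w s F i)) (V - snd (cum V E w s F i)))
        - snd (cum V E w s F i)))"

lemma class_exists:
  assumes fV: "finite V" and wpos: "\<forall>v\<in>V. w v > 0" and fF: "finite F"
  shows "\<exists>k Fc Vc. is_class_seq V E w s F k Fc Vc"
proof -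
  define C where "C = cum V E w s F"
  define Fc where "Fc = (\<lambda>i. mns V E w s (F - fst (C i)) (V - snd (C i)))"
  define Vc where "Vc = (\<lambda>i. Aset V E s (Fc i) - snd (C i))"
  have CS: "C (Suc i) = (fst (C i) \<union> Fc i, snd (C i) \<union> Vc i)" for i
    unfolding C_def Fc_def Vc_def by simp
  have CU: "fst (C i) = \<Union>(Fc ` {..<i}) \<and> snd (C i) = \<Union>(Vc ` {..<i})" for i
  proof (induction i)
    case 0 then show ?case unfolding C_def by simp
  next
    case (Suc i) then show ?case unfolding CS by (auto simp: lessThan_Suc)
  qed
  have M: "is_MNS V E w s (F - fst (C i)) (V - snd (C i)) (Fc i)" if "F - fst (C i) \<noteq> {}" for i
  proof -
    have "\<exists>!T. is_MNS V E w s (F - fst (C i)) (V - snd (C i)) T"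
      by (rule mns_unique[OF fV wpos _ that]) (use fF in simp)
    then show ?thesis unfolding Fc_def mns_def by (rule theI')
  qed
  have grow: "(\<forall>j<i. F - fst (C j) \<noteq> {}) \<longrightarrow> fst (C i) \<subseteq> F \<and> i \<le> card (fst (C i))" for i
  proof (induction i)
    case 0 then show ?case unfolding C_def by simp
  next
    case (Suc i)
    show ?case
    proof
      assume a: "\<forall>j<Suc i. F - fst (C j) \<noteq> {}"
      then have IH: "fst (C i) \<subseteq> F" "i \<le> card (fst (C i))" using Suc by auto
      have "F - fst (C i) \<noteq> {}" using a by simp
      then have m: "Fc i \<subseteq> F - fst (C i)" "Fc i \<noteq> {}" using M unfolding is_MNS_def by blast+
      have f1: "finite (fst (C i))" using IH fF finite_subset by blast
      have f2: "finite (Fc i)" using m fF finite_subset by blast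
      have "card (fst (C i) \<union> Fc i) = card (fst (C i)) + card (Fc i)"
        by (rule card_Un_disjoint[OF f1 f2]) (use m in blast)
      moreover have "card (Fc i) > 0" using f2 m by auto
      ultimately show "fst (C (Suc i)) \<subseteq> F \<and> Suc i \<le> card (fst (C (Suc i)))"
        unfolding CS using IH m by auto
    qed
  qed
  have "\<exists>j. F - fst (C j) = {}"
  proof (rule ccontr)
    assume "\<not> ?thesis"
    then have "fst (C (Suc (card F))) \<subseteq> F \<and> Suc (card F) \<le> card (fst (C (Suc (card F))))"
      using grow by blast
    then have h: "fst (C (Suc (card F))) \<subseteq> F" "Suc (card F) \<le> card (fst (C (Suc (card F))))" by simp_all
    have "card (fst (C (Suc (card F)))) \<le> card F" by (rule card_mono[OF fF h(1)])
    then show False using h(2) by simp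
  qed
  define k where "k = (LEAST j. F - fst (C j) = {})"
  have k1: "F - fst (C k) = {}" unfolding k_def using \<open>\<exists>j. F - fst (C j) = {}\<close> by (rule LeastI_ex)
  have k2: "F - fst (C i) \<noteq> {}" if "i < k" for i using not_less_Least[OF that[unfolded k_def]] by simp
  have "is_class_seq V E w s F k Fc Vc"
    unfolding is_class_seq_def
  proof (intro conjI allI impI)
    fix i assume ik: "i < k"
    show "F - \<Union>(Fc ` {..<i}) \<noteq> {}" using k2[OF ik] CU[of i] by simp
    show "is_MNS V E w s (F - \<Union>(Fc ` {..<i})) (V - \<Union>(Vc ` {..<i})) (Fc i)"
      using M[OF k2[OF ik]] CU[of i] by simp
    show "Vc i = Aset V E s (Fc i) - \<Union>(Vc ` {..<i})" using CU[of i] unfolding Vc_def by simp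
  next
    show "F - \<Union>(Fc ` {..<k}) = {}" using k1 CU[of k] by simp
  qed
  then show ?thesis by blast
qed

theorem mainTheorem6:
  fixes V :: "'v set" and E :: "('v \<times> 'v) set" and w :: "'v \<Rightarrow> rat"
    and F :: "'f set" and s :: "'f \<Rightarrow> 'v"
  assumes "finite V" and "E \<subseteq> V \<times> V" and "\<forall>v \<in> V. w v > 0"
    and "finite F" and "\<forall>f \<in> F. s f \<in> V"
  shows "(\<forall>Fst Vst. Fst \<noteq> {} \<and> Fst \<subseteq> F \<and> Vst \<subseteq> V \<longrightarrow>
            (\<exists>!T. is_MNS V E w s Fst Vst T)) \<and>
         (\<exists>k Fc Vc. is_class_seq V E w s F k Fc Vc) \<and>
         (\<forall>k Fc Vc k' Fc' Vc'. is_class_seq V E w s F k Fc Vc \<and> is_class_seq V E w s F k' Fc' Vc'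
            \<longrightarrow> k = k' \<and> (\<forall>i<k. Fc i = Fc' i \<and> Vc i = Vc' i)) \<and>
         (\<forall>k Fc Vc. is_class_seq V E w s F k Fc Vc \<longrightarrow>
            (\<forall>i. Suc i < k \<longrightarrow> load w (Fc i) (Vc i) < load w (Fc (Suc i)) (Vc (Suc i))))"
proof -
  have P1: "\<forall>Fst Vst. Fst \<noteq> {} \<and> Fst \<subseteq> F \<and> Vst \<subseteq> V \<longrightarrow> (\<exists>!T. is_MNS V E w s Fst Vst T)"
  proof (intro allI impI)
    fix Fst :: "'f set" and Vst :: "'v set"
    assume a: "Fst \<noteq> {} \<and> Fst \<subseteq> F \<and> Vst \<subseteq> V"
    have "finite Fst" using a assms(4) finite_subset by blast
    show "\<exists>!T. is_MNS V E w s Fst Vst T"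
      by (rule mns_unique[OF assms(1) assms(3) \<open>finite Fst\<close>]) (use a in blast)
  qed
  have P2: "\<exists>k Fc Vc. is_class_seq V E w s F k Fc Vc" by (rule class_exists[OF assms(1) assms(3) assms(4)])
  have P3: "\<forall>k Fc Vc k' Fc' Vc'. is_class_seq V E w s F k Fc Vc \<and> is_class_seq V E w s F k' Fc' Vc'
            \<longrightarrow> k = k' \<and> (\<forall>i<k. Fc i = Fc' i \<and> Vc i = Vc' i)"
    using class_uniq[OF assms(1) assms(3) assms(4)] by blast
  have P4: "\<forall>k Fc Vc. is_class_seq V E w s F k Fc Vc \<longrightarrow>
            (\<forall>i. Suc i < k \<longrightarrow> load w (Fc i) (Vc i) < load w (Fc (Suc i)) (Vc (Suc i)))"
    using load_mono[OF assms(1) assms(3) assms(4)] by blast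
  show ?thesis using P1 P2 P3 P4 by blast
qed

end
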